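(* Let $G$ be a finite abelian group and let $n \in \mathbb{N}$. Let \[m= \max \{ \lfloor \lfloor \mathsf{D}(G\oplus C_n)/n \rfloor n/2 \rfloor,\ \lfloor \mathsf{D}(G)/n \rfloor n \}.\] Then $\mathsf{s}_{\le m} ( G )\le \mathsf{D} ( G \oplus C_n )$.
   Context: A sequence over a finite abelian group $H$ is a finite unordered list of elements of $H$ with repetitions; zero-sum means its terms sum to $0$. $\mathsf{D}(H)$ (the Davenport constant) is the smallest $\ell$ such that every sequence over $H$ of length at least $\ell$ has a non-empty zero-sum subsequence. For $m\in\mathbb{N}$, $\mathsf{s}_{\le m}(H)\in\mathbb{N}\cup\{\infty\}$ is the smallest $\ell$ such that every sequence over $H$ of length at least $\ell$ has a non-empty zero-sum subsequence of length at most $m$. $C_n$ is a cyclic group of order $n$. *)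

theory Defs
  imports "HOL-Algebra.Algebra" "HOL-Library.Multiset" "HOL-Library.Extended_Nat"
begin

definition seq_prod :: "('a, 'b) monoid_scheme \<Rightarrow> 'a multiset \<Rightarrow> 'a" where
  "seq_prod G S = finprod G (\<lambda>x. x [^]\<^bsub>G\<^esub> count S x) (set_mset S)"

definition zero_sum :: "('a, 'b) monoid_scheme \<Rightarrow> 'a multiset \<Rightarrow> bool" where
  "zero_sum G S \<longleftrightarrow> seq_prod G S = \<one>\<^bsub>G\<^esub>"

definition is_seq :: "('a, 'b) monoid_scheme \<Rightarrow> 'a multiset \<Rightarrow> bool" where
  "is_seq G S \<longleftrightarrow> set_mset S \<subseteq> carrier G"

definition davenport :: "('a, 'b) monoid_scheme \<Rightarrow> nat" where
  "davenport G = (LEAST l. \<forall>S. is_seq G S \<and> size S \<ge> l \<longrightarrow>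
       (\<exists>T. T \<subseteq># S \<and> T \<noteq> {#} \<and> zero_sum G T))"

definition s_le :: "nat \<Rightarrow> ('a, 'b) monoid_scheme \<Rightarrow> enat" where
  "s_le m G = (let P = (\<lambda>l. \<forall>S. is_seq G S \<and> size S \<ge> l \<longrightarrow>
       (\<exists>T. T \<subseteq># S \<and> T \<noteq> {#} \<and> size T \<le> m \<and> zero_sum G T))
     in if (\<exists>l. P l) then enat (LEAST l. P l) else \<infinity>)"

end

theory Submission
  imports Defs
begin

lemma seq_prod_empty[simp]: "monoid G \<Longrightarrow> seq_prod G {#} = \<one>\<^bsub>G\<^esub>"
  by (simp add: seq_prod_def finprod_def foldD_empty monoid.one_closed)

lemma seq_prod_closed:
  assumes "comm_monoid G" "set_mset S \<subseteq> carrier G"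
  shows "seq_prod G S \<in> carrier G"
proof -
  interpret comm_monoid G by fact
  show ?thesis unfolding seq_prod_def using assms(2) by (intro finprod_closed) auto
qed

lemma seq_prod_add_mset:
  fixes G (structure)
  assumes "comm_monoid G" "x \<in> carrier G" "set_mset S \<subseteq> carrier G"
  shows "seq_prod G (add_mset x S) = x \<otimes>\<^bsub>G\<^esub> seq_prod G S"
proof -
  interpret comm_monoid G by fact
  define f where "f = (\<lambda>y. y [^] count S y)"
  define f' where "f' = (\<lambda>y. y [^] count (add_mset x S) y)"
  have fc: "f \<in> A \<rightarrow> carrier G" if "A \<subseteq> carrier G" for A using that by (auto simp: f_def)
  have fc': "f' \<in> A \<rightarrow> carrier G" if "A \<subseteq> carrier G" for A using that by (auto simp: f'_def)
  show ?thesis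
  proof (cases "x \<in># S")
    case False
    have "seq_prod G (add_mset x S) = finprod G f' (insert x (set_mset S))"
      by (simp add: seq_prod_def f'_def)
    also have "\<dots> = f' x \<otimes> finprod G f' (set_mset S)"
      using False assms by (intro finprod_insert fc') (auto simp: f'_def)
    also have "f' x = x" using False assms by (simp add: f'_def count_eq_zero_iff[THEN iffD2])
    also have "finprod G f' (set_mset S) = finprod G f (set_mset S)"
      using assms False by (intro finprod_cong' fc) (auto simp: f_def f'_def)
    finally show ?thesis by (simp add: seq_prod_def f_def)
  next
    case True
    define A where "A = set_mset S - {x}"
    have sS: "set_mset S = insert x A" using True by (auto simp: A_def)
    have A: "A \<subseteq> carrier G" "x \<notin> A" "finite A" using assms by (auto simp: A_def)
    have "seq_prod G (add_mset x S) = finprod G f' (insert x A)"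
      using sS by (simp add: seq_prod_def f'_def)
    also have "\<dots> = f' x \<otimes> finprod G f' A"
      using A assms by (intro finprod_insert fc') (auto simp: f'_def)
    also have "finprod G f' A = finprod G f A"
      using A by (intro finprod_cong' fc) (auto simp: f_def f'_def)
    also have "f' x = f x \<otimes> x" by (simp add: f'_def f_def)
    finally have 1: "seq_prod G (add_mset x S) = f x \<otimes> x \<otimes> finprod G f A" .
    have "seq_prod G S = finprod G f (insert x A)"
      by (simp add: seq_prod_def f_def sS)
    also have "\<dots> = f x \<otimes> finprod G f A"
      using A assms by (intro finprod_insert fc) (auto simp: f_def)
    finally show ?thesis using 1 A assms fc[OF A(1)]
      by (simp add: m_ac f_def)
  qed
qed

lemma seq_prod_union:
  assumes "comm_monoid G" "set_mset A \<subseteq> carrier G" "set_mset B \<subseteq> carrier G"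
  shows "seq_prod G (A + B) = seq_prod G A \<otimes>\<^bsub>G\<^esub> seq_prod G B"
  using assms(2)
proof (induction A)
  case empty
  then show ?case using assms seq_prod_closed[OF assms(1,3)]
    by (simp add: comm_monoid.axioms(1) monoid.l_one)
next
  case (add x A)
  have cA: "seq_prod G A \<in> carrier G" using add assms by (intro seq_prod_closed) auto
  have cB: "seq_prod G B \<in> carrier G" using add assms by (intro seq_prod_closed) auto
  have "seq_prod G (add_mset x A + B) = seq_prod G (add_mset x (A + B))" by simp
  also have "\<dots> = x \<otimes>\<^bsub>G\<^esub> seq_prod G (A + B)"
    using add assms by (intro seq_prod_add_mset) auto
  also have "\<dots> = x \<otimes>\<^bsub>G\<^esub> (seq_prod G A \<otimes>\<^bsub>G\<^esub> seq_prod G B)" using add by simp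
  also have "\<dots> = (x \<otimes>\<^bsub>G\<^esub> seq_prod G A) \<otimes>\<^bsub>G\<^esub> seq_prod G B"
    using add cA cB assms(1) by (simp add: comm_monoid.axioms(1) monoid.m_assoc)
  also have "x \<otimes>\<^bsub>G\<^esub> seq_prod G A = seq_prod G (add_mset x A)"
    using add assms by (intro seq_prod_add_mset[symmetric]) auto
  finally show ?case .
qed

lemma zero_sum_diff:
  fixes G (structure)
  assumes "comm_group G" "is_seq G T" "U \<subseteq># T" "zero_sum G T" "zero_sum G U"
  shows "zero_sum G (T - U)"
proof -
  interpret comm_group G by fact
  have sU: "set_mset U \<subseteq> carrier G" using assms(2,3) unfolding is_seq_def
    by (auto dest: mset_subset_eqD)
  have sV: "set_mset (T - U) \<subseteq> carrier G" using assms(2) unfolding is_seq_def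
    by (auto dest: in_diffD)
  have "T = U + (T - U)" using assms(3) by simp
  then have "seq_prod G T = seq_prod G U \<otimes> seq_prod G (T - U)"
    using seq_prod_union[OF comm_monoid_axioms sU sV] by simp
  then show ?thesis using assms(4,5) seq_prod_closed[OF comm_monoid_axioms sV]
    unfolding zero_sum_def by simp
qed

lemma mset_take_sub: "mset (take k xs) \<subseteq># mset xs"
proof -
  have "mset xs = mset (take k xs) + mset (drop k xs)"
    by (simp flip: mset_append)
  then show ?thesis by (metis mset_subset_eq_add_left)
qed

lemma davenport_bound:
  fixes G (structure)
  assumes "comm_group G" "finite (carrier G)" "is_seq G S" "size S \<ge> card (carrier G)"
  shows "\<exists>T. T \<subseteq># S \<and> T \<noteq> {#} \<and> zero_sum G T"
proof -
  interpret comm_group G by fact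
  obtain xs where xs: "mset xs = S" using ex_mset by blast
  define N where "N = card (carrier G)"
  define p where "p i = seq_prod G (mset (take i xs))" for i
  have pc: "p i \<in> carrier G" for i
  proof -
    have "set xs \<subseteq> carrier G" using assms(3) unfolding is_seq_def xs[symmetric] by simp
    then have "set (take i xs) \<subseteq> carrier G"
      using set_take_subset[of i xs] by (rule order_trans[rotated])
    then show ?thesis unfolding p_def by (intro seq_prod_closed comm_monoid_axioms) auto
  qed
  have "\<not> inj_on p {0..N}"
  proof
    assume "inj_on p {0..N}"
    then have "card (p ` {0..N}) = card {0..N}" by (rule card_image)
    moreover have "card (p ` {0..N}) \<le> N" unfolding N_def
      using pc assms(2) by (intro card_mono) auto
    ultimately show False by simp
  qed
  then obtain i j where ij: "i \<in> {0..N}" "j \<in> {0..N}" "i \<noteq> j" "p i = p j"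
    unfolding inj_on_def by blast
  have "\<exists>a b. a < b \<and> b \<le> N \<and> p a = p b"
  proof (cases "i < j")
    case True then show ?thesis using ij by auto
  next
    case False then have "j < i" using ij(3) by simp
    then show ?thesis using ij by (intro exI[of _ j] exI[of _ i]) auto
  qed
  then obtain a b where ab: "a < b" "b \<le> N" "p a = p b" by blast
  have len: "N \<le> length xs" using assms(4) xs N_def by auto
  define T where "T = mset (drop a (take b xs))"
  have tk: "take b xs = take a xs @ drop a (take b xs)"
    using ab by (metis append_take_drop_id min.absorb1 less_imp_le take_take)
  have msum: "mset (take b xs) = mset (take a xs) + T"
    unfolding T_def by (subst tk) simp
  have sx: "set xs \<subseteq> carrier G" using assms(3) unfolding is_seq_def xs[symmetric] by simp
  have "set (drop a (take b xs)) \<subseteq> carrier G"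
    using set_drop_subset[of a "take b xs"] set_take_subset[of b xs] sx by (meson order_trans)
  then have sT: "set_mset T \<subseteq> carrier G" unfolding T_def by simp
  have "set (take a xs) \<subseteq> carrier G"
    using set_take_subset[of a xs] sx by (meson order_trans)
  then have sA: "set_mset (mset (take a xs)) \<subseteq> carrier G" by simp
  have "p b = p a \<otimes> seq_prod G T"
    unfolding p_def msum by (rule seq_prod_union[OF comm_monoid_axioms sA sT])
  then have "p a \<otimes> seq_prod G T = p a \<otimes> \<one>" using ab pc by simp
  then have "seq_prod G T = \<one>"
    using pc[of a] seq_prod_closed[OF comm_monoid_axioms sT] l_cancel[of "p a" "seq_prod G T" \<one>]
    by simp
  moreover have "T \<noteq> {#}" unfolding T_def using ab len by auto
  moreover have "T \<subseteq># S"
  proof -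
    have "mset (take b xs) \<subseteq># S" using xs mset_take_sub by blast
    moreover have "T \<subseteq># mset (take b xs)" using msum by simp
    ultimately show ?thesis by (rule subset_mset.order_trans[rotated])
  qed
  ultimately show ?thesis unfolding zero_sum_def by blast
qed

lemma davenport_prop:
  assumes "comm_group G" "finite (carrier G)" "is_seq G S" "size S \<ge> davenport G"
  shows "\<exists>T. T \<subseteq># S \<and> T \<noteq> {#} \<and> zero_sum G T"
proof -
  let ?P = "\<lambda>l. \<forall>S. is_seq G S \<and> size S \<ge> l \<longrightarrow> (\<exists>T. T \<subseteq># S \<and> T \<noteq> {#} \<and> zero_sum G T)"
  have "?P (card (carrier G))" using davenport_bound[OF assms(1,2)] by blast
  then have "?P (davenport G)" unfolding davenport_def by (rule LeastI)
  then show ?thesis using assms(3,4) by blast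
qed

lemma comm_monoid_DirProd:
  assumes "comm_monoid G" "comm_monoid Z"
  shows "comm_monoid (G \<times>\<times> Z)"
proof (rule monoid.monoid_comm_monoidI)
  show "monoid (G \<times>\<times> Z)" using assms by (intro DirProd_monoid) (auto simp: comm_monoid.axioms(1))
  fix x y assume "x \<in> carrier (G \<times>\<times> Z)" "y \<in> carrier (G \<times>\<times> Z)"
  then show "x \<otimes>\<^bsub>G \<times>\<times> Z\<^esub> y = y \<otimes>\<^bsub>G \<times>\<times> Z\<^esub> x"
    using assms by (auto simp: mult_DirProd' comm_monoid.m_comm)
qed

lemma comm_group_DirProd:
  assumes "comm_group G" "comm_group Z"
  shows "comm_group (G \<times>\<times> Z)"
proof (rule group.group_comm_groupI)
  show "group (G \<times>\<times> Z)" using assms by (intro DirProd_group) (auto simp: comm_group.axioms(2))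
  fix x y assume "x \<in> carrier (G \<times>\<times> Z)" "y \<in> carrier (G \<times>\<times> Z)"
  then show "x \<otimes>\<^bsub>G \<times>\<times> Z\<^esub> y = y \<otimes>\<^bsub>G \<times>\<times> Z\<^esub> x"
    using assms by (auto simp: mult_DirProd' comm_monoid.m_comm comm_group.axioms(1))
qed

lemma seq_prod_pair:
  assumes "comm_monoid G" "comm_monoid Z" "c \<in> carrier Z" "set_mset T \<subseteq> carrier G"
  shows "seq_prod (G \<times>\<times> Z) (image_mset (\<lambda>g. (g,c)) T)
         = (seq_prod G T, seq_prod Z (replicate_mset (size T) c))"
  using assms(4)
proof (induction T)
  case empty
  have "monoid (G \<times>\<times> Z)" using assms by (intro DirProd_monoid) (auto simp: comm_monoid.axioms(1))
  then show ?case using assms by (simp add: comm_monoid.axioms(1))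
next
  case (add x T)
  have cm: "comm_monoid (G \<times>\<times> Z)" using assms(1,2) by (rule comm_monoid_DirProd)
  have "seq_prod (G \<times>\<times> Z) (image_mset (\<lambda>g. (g,c)) (add_mset x T))
      = (x, c) \<otimes>\<^bsub>G \<times>\<times> Z\<^esub> seq_prod (G \<times>\<times> Z) (image_mset (\<lambda>g. (g,c)) T)"
    unfolding image_mset_add_mset using add assms by (intro seq_prod_add_mset cm) auto
  also have "\<dots> = (x \<otimes>\<^bsub>G\<^esub> seq_prod G T, c \<otimes>\<^bsub>Z\<^esub> seq_prod Z (replicate_mset (size T) c))"
    using add by simp
  also have "x \<otimes>\<^bsub>G\<^esub> seq_prod G T = seq_prod G (add_mset x T)"
    using add assms by (intro seq_prod_add_mset[symmetric]) auto
  also have "c \<otimes>\<^bsub>Z\<^esub> seq_prod Z (replicate_mset (size T) c) = seq_prod Z (replicate_mset (size (add_mset x T)) c)"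
    unfolding size_add_mset replicate_mset_Suc using assms by (intro seq_prod_add_mset[symmetric]) auto
  finally show ?case .
qed

lemma seq_prod_mod_rep:
  assumes "n \<ge> 1"
  shows "seq_prod (integer_mod_group n) (replicate_mset k (1 mod int n)) = int k mod int n"
proof (induction k)
  case 0
  have "monoid (integer_mod_group n)" by (simp add: group.is_monoid)
  then show ?case by simp
next
  case (Suc k)
  have c: "1 mod int n \<in> carrier (integer_mod_group n)" using assms
    by (simp add: carrier_integer_mod_group)
  have "seq_prod (integer_mod_group n) (replicate_mset (Suc k) (1 mod int n))
     = (1 mod int n + int k mod int n) mod int n"
    unfolding replicate_mset_Suc using Suc c
    by (subst seq_prod_add_mset) (auto simp: comm_group.axioms(1))
  also have "\<dots> = int (Suc k) mod int n" by (simp add: mod_add_eq)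
  finally show ?case .
qed

lemma core:
  assumes "comm_group G" "finite (carrier G)" "is_seq G T" "zero_sum G T" "T \<noteq> {#}"
    "n dvd size T" "size T \<le> D" "n \<ge> 1"
  shows "\<exists>U. U \<subseteq># T \<and> U \<noteq> {#} \<and> size U \<le> max ((D div n * n) div 2) (davenport G div n * n)
           \<and> zero_sum G U"
proof -
  define k where "k = size T"
  define DG where "DG = davenport G"
  have kk: "k = k div n * n" using assms(6) unfolding k_def by simp
  have "k div n \<le> D div n" using assms(7) unfolding k_def by (rule div_le_mono)
  then have kD: "k \<le> D div n * n" using kk by (metis mult_le_mono1)
  show ?thesis
  proof (cases "k \<le> DG div n * n")
    case True
    then show ?thesis using assms(4,5) unfolding k_def DG_def by (intro exI[of _ T]) auto
  next
    case False
    then have "DG div n * n < k div n * n" using kk by simp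
    then have "DG div n < k div n" by simp
    then have "Suc (DG div n) * n \<le> k div n * n" by (metis Suc_leI mult_le_mono1)
    moreover have "DG < Suc (DG div n) * n"
    proof -
      have "DG mod n < n" using assms(8) by simp
      then show ?thesis using div_mult_mod_eq[of DG n] by (simp only: mult_Suc)
    qed
    ultimately have DGk: "DG < k" using kk by linarith
    obtain x where x: "x \<in># T" using assms(5) by blast
    define R where "R = T - {#x#}"
    have sR: "size R = k - 1" unfolding R_def k_def using x by (simp add: size_Diff_singleton)
    have RT: "R \<subseteq># T" unfolding R_def by simp
    have isR: "is_seq G R" using assms(3) RT unfolding is_seq_def
      by (meson mset_subset_eqD subset_iff)
    have "size R \<ge> davenport G" using sR DGk DG_def by simp
    then obtain U where U: "U \<subseteq># R" "U \<noteq> {#}" "zero_sum G U"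
      using davenport_prop[OF assms(1,2) isR] by blast
    have UT: "U \<subseteq># T" using U(1) RT by (rule subset_mset.order_trans)
    define V where "V = T - U"
    have zV: "zero_sum G V" unfolding V_def using zero_sum_diff[OF assms(1,3) UT assms(4) U(3)] .
    have sU: "size U \<le> k - 1" using size_mset_mono[OF U(1)] sR by simp
    have sV: "size V = k - size U" unfolding V_def k_def using UT by (simp add: size_Diff_submset)
    have VT: "V \<subseteq># T" unfolding V_def by simp
    have kpos: "k \<ge> 1" using DGk by simp
    have "V \<noteq> {#}" using sV sU kpos by auto
    have half: "k div 2 \<le> (D div n * n) div 2" using kD by (rule div_le_mono)
    show ?thesis
    proof (cases "size U \<le> k div 2")
      case True
      then show ?thesis using UT U half by (intro exI[of _ U]) auto
    next
      case False
      then have "size V \<le> k div 2" using sV by simp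
      then show ?thesis using VT zV \<open>V \<noteq> {#}\<close> half by (intro exI[of _ V]) auto
    qed
  qed
qed

theorem lemma3p4:
  fixes G :: "('a, 'b) monoid_scheme" and n :: nat
  assumes "comm_group G" and "finite (carrier G)" and "n \<ge> 1"
  shows "s_le (max (((davenport (G \<times>\<times> integer_mod_group n) div n) * n) div 2)
                   ((davenport G div n) * n)) G
         \<le> enat (davenport (G \<times>\<times> integer_mod_group n))"
proof -
  define Z where "Z = integer_mod_group n"
  define H where "H = G \<times>\<times> Z"
  define D where "D = davenport H"
  define m where "m = max ((D div n * n) div 2) (davenport G div n * n)"
  define c where "c = 1 mod int n"
  have cZ: "c \<in> carrier Z" using assms(3) by (simp add: Z_def c_def carrier_integer_mod_group)
  have cgH: "comm_group H" unfolding H_def Z_def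
    using assms(1) by (intro comm_group_DirProd) auto
  have finH: "finite (carrier H)" unfolding H_def Z_def using assms(2,3)
    by (simp add: carrier_integer_mod_group)
  have cmG: "comm_monoid G" using assms(1) by (simp add: comm_group.axioms(1))
  have cmZ: "comm_monoid Z" unfolding Z_def by (simp add: comm_group.axioms(1))
  let ?P = "\<lambda>l. \<forall>S. is_seq G S \<and> size S \<ge> l \<longrightarrow>
       (\<exists>T. T \<subseteq># S \<and> T \<noteq> {#} \<and> size T \<le> m \<and> zero_sum G T)"
  have PD: "?P D"
  proof (intro allI impI)
    fix S assume S: "is_seq G S \<and> D \<le> size S"
    obtain xs where xs: "mset xs = S" using ex_mset by blast
    define S0 where "S0 = mset (take D xs)"
    have S0S: "S0 \<subseteq># S" unfolding S0_def using mset_take_sub xs by blast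
    have szS0: "size S0 = D" unfolding S0_def using S xs by auto
    have isS0: "is_seq G S0" using S S0S unfolding is_seq_def
      by (meson mset_subset_eqD subset_iff)
    define S' where "S' = image_mset (\<lambda>g. (g, c)) S0"
    have isS': "is_seq H S'" using isS0 cZ unfolding is_seq_def S'_def H_def by auto
    have "size S' \<ge> D" unfolding S'_def using szS0 by simp
    then obtain T' where T': "T' \<subseteq># S'" "T' \<noteq> {#}" "zero_sum H T'"
      using davenport_prop[OF cgH finH isS'] D_def by blast
    define T where "T = image_mset fst T'"
    have "image_mset fst S' = S0" unfolding S'_def by (simp add: multiset.map_comp o_def)
    then have TS0: "T \<subseteq># S0" unfolding T_def using image_mset_subseteq_mono[OF T'(1), of fst] by simp
    have "image_mset (\<lambda>g. (g, c)) T = image_mset (\<lambda>y. y) T'"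
      unfolding T_def multiset.map_comp o_def
    proof (rule image_mset_cong)
      fix y assume "y \<in># T'"
      then have "y \<in># S'" using T'(1) by (simp add: mset_subset_eqD)
      then show "(fst y, c) = y" unfolding S'_def by auto
    qed
    then have T'eq: "T' = image_mset (\<lambda>g. (g, c)) T" by simp
    have isT: "is_seq G T" using isS0 TS0 unfolding is_seq_def
      by (meson mset_subset_eqD subset_iff)
    have "seq_prod H T' = (seq_prod G T, int (size T) mod int n)"
      unfolding T'eq H_def using seq_prod_pair[OF cmG cmZ cZ] isT seq_prod_mod_rep[OF assms(3)]
      unfolding is_seq_def Z_def c_def by simp
    then have zT: "zero_sum G T" and "int (size T) mod int n = 0"
      using T'(3) unfolding zero_sum_def H_def Z_def by auto
    then have dvd: "n dvd size T" by (metis of_nat_0 of_nat_eq_iff zmod_int dvd_eq_mod_eq_0)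
    have Tne: "T \<noteq> {#}" using T'(2) unfolding T_def by simp
    have "size T \<le> D" using size_mset_mono[OF TS0] szS0 by simp
    then obtain U where U: "U \<subseteq># T" "U \<noteq> {#}" "size U \<le> m" "zero_sum G U"
      using core[OF assms(1,2) isT zT Tne dvd _ assms(3)] unfolding m_def by blast
    have "U \<subseteq># S" using U(1) TS0 S0S by (meson subset_mset.order_trans)
    then show "\<exists>T. T \<subseteq># S \<and> T \<noteq> {#} \<and> size T \<le> m \<and> zero_sum G T" using U by blast
  qed
  then have ex: "\<exists>l. ?P l" by blast
  have "s_le m G = enat (LEAST l. ?P l)" unfolding s_le_def Let_def using ex by simp
  also have "\<dots> \<le> enat D" using PD by (simp add: Least_le)
  finally show ?thesis unfolding m_def D_def H_def Z_def .
qed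

end
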